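(* Let $Z>0$, $R>0$, and $k>0$ with $k\neq m\pi/Z$ for every integer $m\ge1$. For $m\ge1$ set $k_m=\sqrt{k^2-m^2\pi^2/Z^2}$ if $k>m\pi/Z$ and $k_m=\mathrm{i}\sqrt{m^2\pi^2/Z^2-k^2}$ otherwise, and let $h(t)=tH_1^{(1)\prime}(t)/H_1^{(1)}(t)$ with $H_1^{(1)}$ the Hankel function of the first kind of order one. Let $\Gamma_R=\{(R,z):0<z<Z\}$, let $H^{1/2}_0(\Gamma_R)$ be the space of $v=\sum_{m\ge1}v_m\sin(m\pi z/Z)$ with norm $\|v\|_{H^{1/2}(\Gamma_R)}^2=\sum_{m\ge1}m|v_m|^2<\infty$, and let $H^{-1/2}(\Gamma_R)$ be its dual (pairing $\langle\xi,v\rangle_{\Gamma_R}=\int_0^Z\xi\bar v\,\mathrm{d}z$), normed equivalently by $\|\xi\|_{H^{-1/2}(\Gamma_R)}^2=\sum_{m\ge1}m^{-1}|\xi_m|^2$ for $\xi=\sum\xi_m\sin(m\pi z/Z)$. Define $T:H^{1/2}_0(\Gamma_R)\to H^{-1/2}(\Gamma_R)$ by $T\eta=\sum_{m\ge1}h(k_mR)\eta_m\sin(m\pi z/Z)$. Then there exists a constant $C>0$ depending only on $k$, $R$ and $Z$ such that $\|Tv\|_{H^{-1/2}(\Gamma_R)}\le C\|v\|_{H^{1/2}(\Gamma_R)}$ for all $v\in H^{1/2}_0(\Gamma_R)$. *)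

theory Defs
  imports "HOL-Analysis.Analysis"
begin

definition besselJ1 :: "complex \<Rightarrow> complex" where
  "besselJ1 z = (\<Sum>j. (-1) ^ j * (z / 2) ^ (2 * j + 1) / (of_nat (fact j) * of_nat (fact (j + 1))))"

text \<open>Bessel function of the second kind of order one (DLMF 10.8.1 with n = 1),
  using the principal branch of the logarithm.\<close>
definition besselY1 :: "complex \<Rightarrow> complex" where
  "besselY1 z =
     - 2 / (of_real pi * z)
     + (2 / of_real pi) * Ln (z / 2) * besselJ1 z
     - ((z / 2) / of_real pi) *
         (\<Sum>j. (Digamma (of_nat (j + 1)) + Digamma (of_nat (j + 2))) *
                (- (z ^ 2) / 4) ^ j / (of_nat (fact j) * of_nat (fact (j + 1))))"

definition hankel1 :: "complex \<Rightarrow> complex" where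
  "hankel1 z = besselJ1 z + \<i> * besselY1 z"

definition hfun :: "complex \<Rightarrow> complex" where
  "hfun t = t * deriv hankel1 t / hankel1 t"

definition kmode :: "real \<Rightarrow> real \<Rightarrow> nat \<Rightarrow> complex" where
  "kmode k Z m =
     (if k > real m * pi / Z then complex_of_real (sqrt (k\<^sup>2 - (real m * pi / Z)\<^sup>2))
      else \<i> * complex_of_real (sqrt ((real m * pi / Z)\<^sup>2 - k\<^sup>2)))"

text \<open>Elements of H^{1/2}_0(Gamma_R) and H^{-1/2}(Gamma_R) are represented by their
  sine coefficient sequences (index m \<ge> 1; the entry at index 0 is ignored
  since its weight vanishes).\<close>
definition in_Hhalf :: "(nat \<Rightarrow> complex) \<Rightarrow> bool" where
  "in_Hhalf v \<longleftrightarrow> summable (\<lambda>m. real m * (cmod (v m))\<^sup>2)"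

definition norm_Hhalf :: "(nat \<Rightarrow> complex) \<Rightarrow> real" where
  "norm_Hhalf v = sqrt (\<Sum>m. real m * (cmod (v m))\<^sup>2)"

definition in_Hmhalf :: "(nat \<Rightarrow> complex) \<Rightarrow> bool" where
  "in_Hmhalf \<xi> \<longleftrightarrow> summable (\<lambda>m. (cmod (\<xi> m))\<^sup>2 / real m)"

definition norm_Hmhalf :: "(nat \<Rightarrow> complex) \<Rightarrow> real" where
  "norm_Hmhalf \<xi> = sqrt (\<Sum>m. (cmod (\<xi> m))\<^sup>2 / real m)"

definition DtN :: "real \<Rightarrow> real \<Rightarrow> real \<Rightarrow> (nat \<Rightarrow> complex) \<Rightarrow> (nat \<Rightarrow> complex)" where
  "DtN k R Z \<eta> = (\<lambda>m. if m = 0 then 0 else hfun (kmode k Z m * of_real R) * \<eta> m)"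

end

theory Submission
  imports Defs
begin

definition aco :: "nat \<Rightarrow> complex" where
  "aco j = 1 / (of_nat (fact j) * of_nat (fact (j + 1)))"
definition bco :: "nat \<Rightarrow> complex" where
  "bco j = Digamma (of_nat (j + 1)) + Digamma (of_nat (j + 2))"
definition Af :: "complex fps" where "Af = Abs_fps aco"
definition Pf :: "complex fps" where "Pf = Abs_fps (\<lambda>j. bco j * aco j)"

lemma harm_le_n: "harm n \<le> (real n)"
proof -
  have "harm n = (\<Sum>k=1..n. inverse (real k))" unfolding harm_def by simp
  also have "\<dots> \<le> (\<Sum>k=1..n. 1)" by (intro sum_mono) (auto simp: inverse_le_1_iff)
  finally show ?thesis by simp
qed

lemma bco_harm: "bco j = harm j + harm (Suc j) - 2 * euler_mascheroni"
proof -
  have "Digamma (of_nat (j + 1) :: complex) = harm j - euler_mascheroni"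
    using Digamma_of_nat[of j] by simp
  moreover have "Digamma (of_nat (j + 2) :: complex) = harm (Suc j) - euler_mascheroni"
    using Digamma_of_nat[of "Suc j"] by (simp add: add.commute)
  ultimately show ?thesis unfolding bco_def by simp
qed

lemma norm_bco: "norm (bco j) \<le> 3 * (real j + 1)"
proof -
  have "norm (bco j) \<le> norm (harm j :: complex) + norm (harm (Suc j) :: complex) + norm (2 * euler_mascheroni :: complex)"
    unfolding bco_harm by (rule order_trans[OF norm_triangle_ineq4]) (intro add_mono norm_triangle_ineq order_refl)
  also have "norm (2 * euler_mascheroni :: complex) = 2 * (euler_mascheroni :: real)"
    by (subst of_real_euler_mascheroni[symmetric], subst of_real_numeral[symmetric, where 'a=complex],
        subst of_real_mult[symmetric], subst norm_of_real) (use euler_mascheroni_pos in simp)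
  also have "norm (harm j :: complex) = harm j" by (rule norm_harm)
  also have "norm (harm (Suc j) :: complex) = harm (Suc j)" by (rule norm_harm)
  finally have "norm (bco j) \<le> harm j + harm (Suc j) + 2 * (euler_mascheroni :: real)" .
  moreover have "harm j \<le> real j" "harm (Suc j) \<le> real (Suc j)" by (rule harm_le_n)+
  moreover have "(euler_mascheroni :: real) < 1" using euler_mascheroni_less_13_over_22 by simp
  ultimately show ?thesis by simp
qed

lemma norm_aco: "norm (aco j) = 1 / (fact j * fact (j + 1))"
proof -
  define x where "x = 1 / (fact j * fact (j+1) :: real)"
  have "aco j = of_real x" unfolding aco_def x_def by (simp del: fact_Suc)
  hence "norm (aco j) = \<bar>x\<bar>" by (simp only: norm_of_real)
  moreover have "x \<ge> 0" unfolding x_def by (simp del: fact_Suc)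
  ultimately show ?thesis unfolding x_def by simp
qed

lemma aco_le: "norm (aco j) \<le> 1 / fact j"
proof -
  have "fact j * 1 \<le> (fact j * fact (j+1) :: real)"
    by (intro mult_left_mono) (auto simp: fact_ge_1 simp del: fact_Suc)
  moreover have "(fact j :: real) > 0" "(fact (j+1) :: real) > 0" by simp_all
  ultimately show ?thesis unfolding norm_aco by (intro divide_left_mono) (auto simp del: fact_Suc)
qed

lemma pco_le: "norm (bco j * aco j) \<le> 3 / fact j"
proof -
  have "norm (bco j * aco j) \<le> 3 * (real j + 1) * (1 / (fact j * fact (j + 1)))"
    unfolding norm_mult norm_aco by (intro mult_right_mono norm_bco) auto
  also have "\<dots> = 3 / (fact j * fact j)"
  proof -
    have e: "(fact (j+1) :: real) = (real j + 1) * fact j" by simp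
    have "\<And>f y::real. f > 0 \<Longrightarrow> y > 0 \<Longrightarrow> 3 * y * (1 / (f * (y * f))) = 3 / (f * f)"
      by (simp add: field_simps)
    from this[of "fact j" "real j + 1"] show ?thesis unfolding e by simp
  qed
  also have "\<dots> \<le> 3 / fact j"
    by (intro divide_left_mono) (auto simp: fact_ge_1 intro!: mult_pos_pos)
  finally show ?thesis .
qed

lemma summable_by_fact:
  fixes c :: "nat \<Rightarrow> complex"
  assumes "\<And>j. norm (c j) \<le> K / fact j"
  shows "summable (\<lambda>n. c n * z ^ n)"
proof (rule summable_comparison_test)
  show "\<exists>N. \<forall>n\<ge>N. norm (c n * z ^ n) \<le> K * (inverse (fact n) * norm z ^ n)"
  proof (intro exI[of _ 0] allI impI)
    fix n :: nat
    have "norm (c n) * norm z ^ n \<le> K / fact n * norm z ^ n"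
      by (rule mult_right_mono[OF assms]) simp
    thus "norm (c n * z ^ n) \<le> K * (inverse (fact n) * norm z ^ n)"
      by (simp add: norm_mult norm_power divide_inverse)
  qed
  show "summable (\<lambda>n. K * (inverse (fact n) * norm z ^ n))"
    by (intro summable_mult summable_exp)
qed

lemma rad_Af: "fps_conv_radius Af = \<infinity>"
  unfolding fps_conv_radius_def Af_def
  by (intro conv_radius_inftyI'' summable_by_fact[where K=1]) (use aco_le in simp)

lemma rad_Pf: "fps_conv_radius Pf = \<infinity>"
  unfolding fps_conv_radius_def Pf_def
  by (intro conv_radius_inftyI'' summable_by_fact[where K=3]) (use pco_le in simp)

lemma rad_deriv: "fps_conv_radius (F :: complex fps) = \<infinity> \<Longrightarrow> fps_conv_radius (fps_deriv F) = \<infinity>"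
  using fps_conv_radius_deriv[of F] by simp

lemma aco_Suc: "aco n = of_nat ((n+1)*(n+2)) * aco (n+1)"
proof -
  have e: "fact (n+1) * fact (n+1+1) = ((n+1)*(n+2)) * (fact n * fact (n+1)::nat)"
    by (simp only: fact_Suc Suc_eq_plus1[symmetric]) (simp add: algebra_simps)
  have "aco (n+1) = 1 / (of_nat ((n+1)*(n+2)) * of_nat (fact n * fact (n+1)))"
    unfolding aco_def of_nat_mult[symmetric] e by simp
  moreover have "aco n = 1 / of_nat (fact n * fact (n+1))" unfolding aco_def by simp
  moreover have "(of_nat ((n+1)*(n+2)) :: complex) \<noteq> 0" unfolding of_nat_eq_0_iff by simp
  ultimately show ?thesis by (simp del: of_nat_mult fact_Suc)
qed

lemma bco_Suc: "bco (n+1) - bco n = 1 / of_nat (n+1) + 1 / of_nat (n+2)"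
  unfolding bco_harm by (simp add: harm_Suc field_simps)

lemma fpsA: "fps_X * fps_deriv (fps_deriv Af) + 2 * fps_deriv Af - Af = 0"
proof (rule fps_ext)
  fix n
  have "fps_nth (2 * fps_deriv Af) n = 2 * (of_nat (n+1) * aco (n+1))"
    unfolding Af_def by (simp add: numeral_fps_const)
  moreover have "fps_nth (fps_X * fps_deriv (fps_deriv Af)) n = of_nat n * of_nat (n+1) * aco (n+1)"
    unfolding Af_def by (cases n) auto
  ultimately show "fps_nth (fps_X * fps_deriv (fps_deriv Af) + 2 * fps_deriv Af - Af) n = fps_nth 0 n"
    by (simp add: Af_def aco_Suc[of n] algebra_simps)
qed

lemma alg1:
  fixes x a b :: complex
  assumes "x + 1 \<noteq> 0" "x + 2 \<noteq> 0"
  shows "x * (x+1) * ((b + 1/(x+1) + 1/(x+2)) * a) + 2 * ((x+1) * ((b + 1/(x+1) + 1/(x+2)) * a))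
           - b * ((x+1) * (x+2) * a) = a + 2 * ((x+1) * a)"
proof -
  define u where "u = 1/(x+1)"
  define v where "v = 1/(x+2)"
  have hu: "(x+1) * u = 1" unfolding u_def using assms by simp
  have hv: "(x+2)* v = 1" unfolding v_def using assms by simp
  have A: "x * (x+1) * ((b + u + v) * a) + 2 * ((x+1) * ((b + u + v) * a)) = (x+1)*(x+2)*(b+u+v)*a"
    by (simp add: algebra_simps)
  have B: "(x+1)*(x+2)*(b+u+v) = (x+1)*(x+2)*b + (x+2)*((x+1) * u) + (x+1)*((x+2)* v)"
    by (simp add: algebra_simps)
  have "x * (x+1) * ((b + u + v) * a) + 2 * ((x+1) * ((b + u + v) * a)) - b * ((x+1) * (x+2) * a)
      = ((x+1)*(x+2)*b + (x+2) + (x+1)) * a - b * ((x+1) * (x+2) * a)"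
    unfolding A B hu hv by simp
  also have "\<dots> = a + 2 * ((x+1) * a)" by (simp add: algebra_simps)
  finally show ?thesis unfolding u_def v_def .
qed

lemma fpsP: "fps_X * (fps_X * fps_deriv (fps_deriv Pf) + 2 * fps_deriv Pf - Pf) = Af + 2 * fps_X * fps_deriv Af - 1"
proof (rule fps_ext)
  fix n
  show "fps_nth (fps_X * (fps_X * fps_deriv (fps_deriv Pf) + 2 * fps_deriv Pf - Pf)) n = fps_nth (Af + 2 * fps_X * fps_deriv Af - 1) n"
  proof (cases n)
    case 0
    thus ?thesis by (simp add: Af_def aco_def numeral_fps_const)
  next
    case (Suc m)
    have l: "fps_nth (fps_X * (fps_X * fps_deriv (fps_deriv Pf) + 2 * fps_deriv Pf - Pf)) n
        = of_nat m * of_nat (m+1) * (bco (m+1) * aco (m+1)) + 2 * (of_nat (m+1) * (bco (m+1) * aco (m+1))) - bco m * aco m"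
      using Suc unfolding Pf_def by (cases m) (simp_all add: numeral_fps_const)
    have r: "fps_nth (Af + 2 * fps_X * fps_deriv Af - 1) n = aco (m+1) + 2 * (of_nat (m+1) * aco (m+1))"
      using Suc unfolding Af_def by (simp add: numeral_fps_const mult.assoc)
    have b: "bco (m+1) = bco m + 1 / of_nat (m+1) + 1 / of_nat (m+2)"
      using bco_Suc[of m] by (simp add: algebra_simps)
    define x where "x = (of_nat m :: complex)"
    have e1: "of_nat (m+1) = x + 1" and e2: "of_nat (m+2) = x + 2"
      and e3: "of_nat ((m+1)*(m+2)) = (x+1)*(x+2)" unfolding x_def by (simp_all add: algebra_simps)
    have "of_nat (m+1) \<noteq> (0::complex)" unfolding of_nat_eq_0_iff by simp
    hence h1: "x + 1 \<noteq> 0" unfolding e1 .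
    have "of_nat (m+2) \<noteq> (0::complex)" unfolding of_nat_eq_0_iff by simp
    hence h2: "x + 2 \<noteq> 0" unfolding e2 .
    show ?thesis unfolding l r b aco_Suc[of m] e1 e2 e3 x_def[symmetric]
      by (rule alg1[OF h1 h2])
  qed
qed

lemma barrier:
  fixes \<phi> \<phi>' :: "real \<Rightarrow> real"
  assumes d: "\<And>s. s \<ge> a \<Longrightarrow> (\<phi> has_real_derivative \<phi>' s) (at s)"
    and p: "\<And>s. s \<ge> a \<Longrightarrow> \<phi> s \<ge> 0 \<Longrightarrow> \<phi>' s > 0"
    and a: "\<phi> a \<ge> 0" and t: "t \<ge> a"
  shows "\<phi> t \<ge> 0"
proof (rule ccontr)
  assume neg: "\<not> \<phi> t \<ge> 0"
  define S where "S = {a..t} \<inter> \<phi> -` {0..}"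
  have cont: "continuous_on {a..t} \<phi>"
  proof (intro continuous_at_imp_continuous_on ballI)
    fix x assume "x \<in> {a..t}"
    thus "isCont \<phi> x" by (intro DERIV_isCont[OF d]) auto
  qed
  have cl: "closed S" unfolding S_def
    by (intro continuous_closed_preimage cont) auto
  have ne: "S \<noteq> {}" using a t unfolding S_def by auto
  have bdd: "bdd_above S" unfolding S_def by (auto intro: bdd_aboveI[of _ t])
  define T where "T = Sup S"
  have TS: "T \<in> S" unfolding T_def by (rule closed_contains_Sup[OF ne bdd cl])
  hence T: "a \<le> T" "T \<le> t" "\<phi> T \<ge> 0" unfolding S_def by auto
  have "T \<noteq> t" using T neg by auto
  with T have Tt: "T < t" by simp
  from DERIV_pos_inc_right[OF d[OF T(1)] p[OF T(1) T(3)]]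
  obtain dd where dd: "dd > 0" "\<And>h. h > 0 \<Longrightarrow> h < dd \<Longrightarrow> \<phi> T < \<phi> (T + h)" by blast
  define h where "h = min (dd/2) ((t - T)/2)"
  have "h \<le> (t - T)/2" "h \<le> dd/2" unfolding h_def by (simp_all add: min_def)
  hence h: "h > 0" "h < dd" "T + h \<le> t" using dd Tt unfolding h_def by auto
  have "\<phi> (T + h) \<ge> 0" using dd(2)[OF h(1) h(2)] T by simp
  hence "T + h \<in> S" using h T unfolding S_def by auto
  hence "T + h \<le> T" unfolding T_def by (rule cSup_upper[OF _ bdd])
  with h show False by simp
qed

lemma ode_bound:
  fixes u u' v :: "real \<Rightarrow> real"
  assumes du: "\<And>s. s > 0 \<Longrightarrow> (u has_real_derivative u' s) (at s)"
    and dv: "\<And>s. s > 0 \<Longrightarrow> (v has_real_derivative (s + 1/s) * u s) (at s)"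
    and vdef: "\<And>s. s > 0 \<Longrightarrow> v s = s * u' s"
  shows "\<exists>S C. \<forall>s\<ge>S. \<bar>u' s\<bar> \<le> C * \<bar>u s\<bar>"
proof -
  define E where "E s = u s * v s" for s
  have dE: "(E has_real_derivative (s * (u' s)\<^sup>2 + (s + 1/s) * (u s)\<^sup>2)) (at s)" if "s > 0" for s
  proof -
    note du' = du[OF that] and dv' = dv[OF that]
    have "(E has_real_derivative (u' s * v s + u s * ((s + 1/s) * u s))) (at s)"
      unfolding E_def[abs_def] using DERIV_mult[OF du' dv'] by (simp add: mult.commute)
    thus ?thesis using vdef[OF that] by (simp add: power2_eq_square algebra_simps)
  qed
  have Emono: "E x \<le> E y" if "1 \<le> x" "x \<le> y" for x y
    using that by (intro DERIV_nonneg_imp_nondecreasing[of x y E])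
      (auto intro!: exI dE intro: add_nonneg_nonneg mult_nonneg_nonneg)
  define D where "D s = (v s)\<^sup>2 - (s\<^sup>2 + 1) * (u s)\<^sup>2" for s
  have dD: "(D has_real_derivative (- 2 * s * (u s)\<^sup>2)) (at s)" if "s > 0" for s
  proof -
    note du' = du[OF that] and dv' = dv[OF that]
    have "(D has_real_derivative (2 * v s * ((s + 1/s) * u s) - (2 * s * (u s)\<^sup>2 + (s\<^sup>2 + 1) * (2 * u s * u' s)))) (at s)"
      unfolding D_def[abs_def] apply (rule derivative_eq_intros du' dv' refl)+ by (simp add: algebra_simps power2_eq_square)
    moreover have "2 * v s * ((s + 1/s) * u s) - (2 * s * (u s)\<^sup>2 + (s\<^sup>2 + 1) * (2 * u s * u' s)) = - 2 * s * (u s)\<^sup>2"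
      using vdef[OF that] that by (simp add: field_simps power2_eq_square)
    ultimately show ?thesis by simp
  qed
  have Dmono: "D y \<le> D x" if "1 \<le> x" "x \<le> y" for x y
    using that by (intro DERIV_nonpos_imp_nonincreasing[of x y D])
      (auto intro!: exI dD)
  show ?thesis
  proof (cases "\<exists>s0\<ge>1. E s0 > 0")
    case True
    then obtain s0 where s0: "s0 \<ge> 1" "E s0 > 0" by blast
    have us0: "u s0 \<noteq> 0" using s0 unfolding E_def by auto
    define c where "c = (u s0)\<^sup>2"
    have c: "c > 0" using us0 unfolding c_def by simp
    define K where "K = 2 + \<bar>D s0\<bar> / c"
    have "\<bar>u' s\<bar> \<le> sqrt K * \<bar>u s\<bar>" if s: "s \<ge> s0" for s
    proof -
      have Epos: "E x > 0" if "s0 \<le> x" for x using Emono[of s0 x] that s0 by simp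
      have "(\<lambda>x. (u x)\<^sup>2) s0 \<le> (\<lambda>x. (u x)\<^sup>2) s"
      proof (rule DERIV_nonneg_imp_nondecreasing[OF s])
        fix x assume x: "s0 \<le> x" "x \<le> s"
        have dux: "(u has_real_derivative u' x) (at x)" using x s0 by (intro du) auto
        have "((\<lambda>x. (u x)\<^sup>2) has_real_derivative 2 * u x * u' x) (at x)"
          by (auto intro!: derivative_eq_intros dux)
        moreover have "2 * u x * u' x \<ge> 0"
        proof -
          have "E x = x * (u x * u' x)" using vdef[of x] x s0 unfolding E_def by simp
          hence "x * (u x * u' x) > 0" using Epos[of x] x by simp
          hence "u x * u' x > 0" using x s0 by (simp add: zero_less_mult_iff)
          thus ?thesis by simp
        qed
        ultimately show "\<exists>y. ((\<lambda>x. (u x)\<^sup>2) has_real_derivative y) (at x) \<and> 0 \<le> y" by blast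
      qed
      hence cu: "c \<le> (u s)\<^sup>2" unfolding c_def by simp
      have "D s \<le> D s0" using Dmono[of s0 s] s s0 by simp
      hence "s\<^sup>2 * (u' s)\<^sup>2 \<le> (s\<^sup>2 + 1) * (u s)\<^sup>2 + \<bar>D s0\<bar>"
        using vdef[of s] s s0 unfolding D_def by (simp add: power_mult_distrib)
      also have "\<bar>D s0\<bar> \<le> \<bar>D s0\<bar> / c * (u s)\<^sup>2"
      proof -
        have "\<bar>D s0\<bar> / c * (u s)\<^sup>2 \<ge> \<bar>D s0\<bar> / c * c"
          using cu c by (intro mult_left_mono) auto
        thus ?thesis using c by simp
      qed
      finally have A: "s\<^sup>2 * (u' s)\<^sup>2 \<le> (s\<^sup>2 + 1 + \<bar>D s0\<bar> / c) * (u s)\<^sup>2"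
        by (simp add: algebra_simps)
      have s1: "s \<ge> 1" using s s0 by simp
      hence s2: "s\<^sup>2 \<ge> 1" by (rule one_le_power)
      define q where "q = \<bar>D s0\<bar> / c"
      have q0: "q \<ge> 0" unfolding q_def using c by simp
      have "1 * q \<le> s\<^sup>2 * q" by (rule mult_right_mono[OF s2 q0])
      moreover have "s\<^sup>2 * K = 2 * s\<^sup>2 + s\<^sup>2 * q" unfolding K_def q_def by (simp add: algebra_simps)
      ultimately have K1: "s\<^sup>2 + 1 + q \<le> s\<^sup>2 * K" using s2 by linarith
      have "(s\<^sup>2 + 1 + q) * (u s)\<^sup>2 \<le> (s\<^sup>2 * K) * (u s)\<^sup>2"
        by (rule mult_right_mono[OF K1]) simp
      hence "s\<^sup>2 * (u' s)\<^sup>2 \<le> (s\<^sup>2 * K) * (u s)\<^sup>2" using A unfolding q_def by linarith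
      hence "s\<^sup>2 * (u' s)\<^sup>2 \<le> s\<^sup>2 * (K * (u s)\<^sup>2)" by (simp only: mult.assoc)
      hence B: "(u' s)\<^sup>2 \<le> K * (u s)\<^sup>2" using s2 by (subst (asm) mult_le_cancel_left_pos) auto
      have "sqrt ((u' s)\<^sup>2) \<le> sqrt (K * (u s)\<^sup>2)" using B by (rule real_sqrt_le_mono)
      thus ?thesis by (simp add: real_sqrt_mult)
    qed
    thus ?thesis by blast
  next
    case False
    hence Eneg: "E s \<le> 0" if "s \<ge> 1" for s using that by (auto simp: not_less)
    show ?thesis
    proof (cases "\<exists>s1\<ge>1. u s1 = 0")
      case True
      then obtain s1 where s1: "s1 \<ge> 1" "u s1 = 0" by blast
      have E0: "E s = 0" if "s \<ge> s1" for s
        using Emono[of s1 s] Eneg[of s] that s1 unfolding E_def by auto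
      have "\<bar>u' s\<bar> \<le> 0 * \<bar>u s\<bar>" if s: "s \<ge> s1 + 1" for s
      proof -
        have "s * (u' s)\<^sup>2 + (s + 1/s) * (u s)\<^sup>2 = 0"
        proof (rule DERIV_local_const[OF dE])
          show "s > 0" using s s1 by simp
          show "(0::real) < 1" by simp
          show "\<forall>y. \<bar>s - y\<bar> < 1 \<longrightarrow> E s = E y" using E0 s by auto
        qed
        moreover have "s * (u' s)\<^sup>2 \<ge> 0" "(s + 1/s) * (u s)\<^sup>2 \<ge> 0" using s s1 by auto
        ultimately have "s * (u' s)\<^sup>2 = 0" by linarith
        thus ?thesis using s s1 by simp
      qed
      thus ?thesis by blast
    next
      case False
      hence unz: "u s \<noteq> 0" if "s \<ge> 1" for s using that by auto
      define r where "r s = - v s / (s * u s)" for s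
      have rE: "r s = - E s / (s * (u s)\<^sup>2)" if "s \<ge> 1" for s
        using unz[OF that] that unfolding r_def E_def by (simp add: field_simps power2_eq_square)
      have r0: "r s \<ge> 0" if "s \<ge> 1" for s
        proof -
        have "s * (u s)\<^sup>2 \<ge> 0" using that by simp
        hence "E s / (s * (u s)\<^sup>2) \<le> 0" using Eneg[OF that] by (rule divide_nonpos_nonneg[rotated])
        thus ?thesis using rE[OF that] by simp
      qed
      have ru: "u' s = - r s * u s" if "s \<ge> 1" for s
        using unz[OF that] that vdef[of s] unfolding r_def by (simp add: field_simps)
      have dr: "(r has_real_derivative ((r s)\<^sup>2 - r s / s - 1 - 1 / s\<^sup>2)) (at s)" if s: "s \<ge> 1" for s
      proof -
        have du': "(u has_real_derivative u' s) (at s)" and dv': "(v has_real_derivative (s + 1/s) * u s) (at s)"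
          using s by (auto intro!: du dv)
        have dn: "((\<lambda>s. - v s) has_real_derivative - ((s + 1/s) * u s)) (at s)"
          by (rule DERIV_minus[OF dv'])
        have dd: "((\<lambda>s. s * u s) has_real_derivative 1 * u s + s * u' s) (at s)"
          using DERIV_mult[OF DERIV_ident du'] by (simp add: mult.commute)
        have "s * u s \<noteq> 0" using unz[OF s] s by simp
        from DERIV_divide[OF dn dd this]
        have "(r has_real_derivative
           ((- ((s + 1/s) * u s)) * (s * u s) - (- v s) * (1 * u s + s * u' s)) / ((s * u s) * (s * u s))) (at s)"
          unfolding r_def[abs_def] by simp
        moreover have "((- ((s + 1/s) * u s)) * (s * u s) - (- v s) * (1 * u s + s * u' s)) / ((s * u s) * (s * u s))
            = (r s)\<^sup>2 - r s / s - 1 - 1 / s\<^sup>2"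
          using unz[OF s] s vdef[of s] unfolding r_def by (simp add: field_simps power2_eq_square)
        ultimately show ?thesis by simp
      qed
      have rlt: "r s < 3" if s: "s \<ge> 1" for s
      proof (rule ccontr)
        assume "\<not> r s < 3"
        hence rs: "r s - 3 \<ge> 0" by simp
        have keep: "r t - 3 \<ge> 0" if "t \<ge> s" for t
        proof (rule barrier[of s "\<lambda>t. r t - 3" "\<lambda>t. (r t)\<^sup>2 - r t / t - 1 - 1 / t\<^sup>2", OF _ _ rs that])
          fix t assume t: "t \<ge> s"
          show "((\<lambda>t. r t - 3) has_real_derivative (r t)\<^sup>2 - r t / t - 1 - 1 / t\<^sup>2) (at t)"
            using dr[of t] t s by (auto intro!: derivative_eq_intros)
        next
          fix t assume t: "t \<ge> s" and "r t - 3 \<ge> 0"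
          hence r3: "r t \<ge> 3" by simp
          have "r t / t \<le> r t" using t s r3 by (simp add: divide_le_eq)
          moreover have "1 / t\<^sup>2 \<le> 1" using t s by (simp add: divide_le_eq one_le_power)
          moreover have "(r t)\<^sup>2 \<ge> 3 * r t" using r3 by (simp add: power2_eq_square)
          ultimately show "(r t)\<^sup>2 - r t / t - 1 - 1 / t\<^sup>2 > 0" using r3 by linarith
        qed
        define \<rho> where "\<rho> t = 1 / r t + t / 3" for t
        have "\<rho> (s + 3) \<le> \<rho> s"
        proof (rule DERIV_nonpos_imp_nonincreasing[of s "s+3" \<rho>])
          fix t assume t: "s \<le> t" "t \<le> s + 3"
          have r3: "r t \<ge> 3" using keep[of t] t by simp
          have "(\<rho> has_real_derivative (- ((r t)\<^sup>2 - r t / t - 1 - 1 / t\<^sup>2) / (r t)\<^sup>2 + 1/3)) (at t)"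
            unfolding \<rho>_def[abs_def] using r3 t s
            by (auto intro!: derivative_eq_intros dr simp: power2_eq_square)
          moreover have "- ((r t)\<^sup>2 - r t / t - 1 - 1 / t\<^sup>2) / (r t)\<^sup>2 + 1/3 \<le> 0"
          proof -
            have "r t / t \<le> r t" using t s r3 by (simp add: divide_le_eq)
            moreover have "1 / t\<^sup>2 \<le> 1" using t s by (simp add: divide_le_eq one_le_power)
            moreover have "2 * (r t)\<^sup>2 - 3 * r t - 6 \<ge> 0"
            proof -
              have "(r t) * (2 * r t - 3) \<ge> 3 * 3" using r3 by (intro mult_mono) auto
              thus ?thesis by (simp add: power2_eq_square algebra_simps)
            qed
            ultimately have "(r t)\<^sup>2 - r t / t - 1 - 1 / t\<^sup>2 \<ge> (r t)\<^sup>2 / 3" by linarith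
            moreover have "(r t)\<^sup>2 > 0" using r3 by simp
            ultimately show ?thesis by (simp add: field_simps)
          qed
          ultimately show "\<exists>y. (\<rho> has_real_derivative y) (at t) \<and> y \<le> 0" by blast
        qed simp
        moreover have "\<rho> s \<le> 1/3 + s/3" using rs unfolding \<rho>_def by (simp add: divide_le_eq)
        moreover have "\<rho> (s + 3) > (s + 3) / 3" using keep[of "s+3"] unfolding \<rho>_def by simp
        ultimately show False by (simp add: field_simps)
      qed
      have "\<bar>u' s\<bar> \<le> 3 * \<bar>u s\<bar>" if s: "s \<ge> 1" for s
        using ru[OF s] r0[OF s] rlt[OF s] by (simp add: abs_mult mult_right_mono)
      thus ?thesis by blast
    qed
  qed
qed

lemma alg:
  fixes z XA XB XP XL p :: complex
  assumes "z \<noteq> 0" "p \<noteq> 0"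
  shows "(1-z^2)/2*XA + \<i>*(-2/(p*z^2) + 2/p*((XA/2 + (-(z^2)/4)*XB) + (XL*((1-z^2)/2*XA) + (XA/2 + (-(z^2)/4)*XB))) - 1/p*((1-z^2)/2*XP + 2*(XA + 2*(-(z^2)/4)*XB - 1)))
   = (1/z - z) * (z/2*XA + \<i>*(-2/(p*z) + 2/p * XL * (z/2*XA) - 1/p*(z/2*XP)))"
  using assms by (simp add: field_simps power2_eq_square)

definition wz :: "complex \<Rightarrow> complex" where "wz z = -(z^2)/4"
definition yF :: "complex fps \<Rightarrow> complex \<Rightarrow> complex" where
  "yF F z = z/2 * eval_fps F (wz z)"
definition ydF :: "complex fps \<Rightarrow> complex \<Rightarrow> complex" where
  "ydF F z = eval_fps F (wz z)/2 + wz z * eval_fps (fps_deriv F) (wz z)"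

lemma d_wz: "(wz has_field_derivative (-z/2)) (at z)"
  unfolding wz_def[abs_def] by (auto intro!: derivative_eq_intros)

lemma chain_w:
  assumes "fps_conv_radius F = \<infinity>"
  shows "((\<lambda>z. eval_fps F (wz z)) has_field_derivative eval_fps (fps_deriv F) (wz z) * (-z/2)) (at z)"
  by (rule DERIV_chain2[OF has_field_derivative_eval_fps d_wz]) (use assms in simp)

lemma d_yF:
  assumes "fps_conv_radius F = \<infinity>"
  shows "(yF F has_field_derivative ydF F z) (at z)"
proof -
  have "((\<lambda>z. z/2 * eval_fps F (wz z)) has_field_derivative
      (1/2) * eval_fps F (wz z) + eval_fps (fps_deriv F) (wz z) * (-z/2) * (z/2)) (at z)"
    using DERIV_mult[OF DERIV_cdivide[OF DERIV_ident, of 2] chain_w[OF assms]] by simp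
  moreover have "(1/2) * eval_fps F (wz z) + eval_fps (fps_deriv F) (wz z) * (-z/2) * (z/2) = ydF F z"
    unfolding ydF_def wz_def by (simp add: field_simps power2_eq_square)
  ultimately show ?thesis unfolding yF_def[abs_def] by simp
qed

lemma d_zydF:
  assumes F: "fps_conv_radius F = \<infinity>"
  shows "((\<lambda>z. z * ydF F z) has_field_derivative
     ((1 - z^2)/2 * eval_fps F (wz z) + 2 * wz z * (wz z * eval_fps (fps_deriv (fps_deriv F)) (wz z)
        + 2 * eval_fps (fps_deriv F) (wz z) - eval_fps F (wz z)))) (at z)"
proof -
  have F1: "fps_conv_radius (fps_deriv F) = \<infinity>" by (rule rad_deriv[OF F])
  note c0 = chain_w[OF F] and c1 = chain_w[OF F1]
  define E0 where "E0 = eval_fps F (wz z)"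
  define E1 where "E1 = eval_fps (fps_deriv F) (wz z)"
  define E2 where "E2 = eval_fps (fps_deriv (fps_deriv F)) (wz z)"
  have d1: "((\<lambda>z. eval_fps F (wz z)/2 + wz z * eval_fps (fps_deriv F) (wz z)) has_field_derivative
      (E1 * (-z/2)) / 2 + (wz z * (E2 * (-z/2)) + (-z/2) * E1)) (at z)"
    unfolding E0_def E1_def E2_def
    by (intro DERIV_add DERIV_cdivide c0 DERIV_mult' d_wz c1)
  have "((\<lambda>z. z * ydF F z) has_field_derivative
      z * ((E1 * (-z/2)) / 2 + (wz z * (E2 * (-z/2)) + (-z/2) * E1)) + 1 * ydF F z) (at z)"
    unfolding ydF_def by (intro DERIV_mult' DERIV_ident d1)
  moreover have "z * ((E1 * (-z/2)) / 2 + (wz z * (E2 * (-z/2)) + (-z/2) * E1)) + 1 * ydF F z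
     = (1 - z^2)/2 * E0 + 2 * wz z * (wz z * E2 + 2 * E1 - E0)"
  proof -
    have wzeq: "wz z = -(z^2)/4" by (simp add: wz_def)
    show ?thesis unfolding ydF_def E0_def[symmetric] E1_def[symmetric] unfolding wzeq
      by (simp add: field_simps power2_eq_square)
  qed
  ultimately show ?thesis unfolding E0_def E1_def E2_def by simp
qed

lemma rad_mult: "fps_conv_radius f = \<infinity> \<Longrightarrow> fps_conv_radius g = \<infinity> \<Longrightarrow> fps_conv_radius (f * g :: complex fps) = \<infinity>"
  using fps_conv_radius_mult[of f g] by simp
lemma rad_add: "fps_conv_radius f = \<infinity> \<Longrightarrow> fps_conv_radius g = \<infinity> \<Longrightarrow> fps_conv_radius (f + g :: complex fps) = \<infinity>"
  using fps_conv_radius_add[of f g] by simp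
lemma rad_diff: "fps_conv_radius f = \<infinity> \<Longrightarrow> fps_conv_radius g = \<infinity> \<Longrightarrow> fps_conv_radius (f - g :: complex fps) = \<infinity>"
  using fps_conv_radius_diff[of f g] by simp

lemmas rads = rad_Af rad_Pf rad_deriv rad_mult rad_add rad_diff fps_conv_radius_fps_X fps_conv_radius_numeral fps_conv_radius_1

lemma QA_eval:
  "x * eval_fps (fps_deriv (fps_deriv Af)) x + 2 * eval_fps (fps_deriv Af) x - eval_fps Af x = 0"
proof -
  have "eval_fps (fps_X * fps_deriv (fps_deriv Af) + 2 * fps_deriv Af - Af) x = 0"
    unfolding fpsA by simp
  thus ?thesis
    by (simp add: eval_fps_diff eval_fps_add eval_fps_mult rads)
qed

lemma QP_eval:
  "x * (x * eval_fps (fps_deriv (fps_deriv Pf)) x + 2 * eval_fps (fps_deriv Pf) x - eval_fps Pf x)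
     = eval_fps Af x + 2 * x * eval_fps (fps_deriv Af) x - 1"
proof -
  have "eval_fps (fps_X * (fps_X * fps_deriv (fps_deriv Pf) + 2 * fps_deriv Pf - Pf)) x
      = eval_fps (Af + 2 * fps_X * fps_deriv Af - 1) x"
    unfolding fpsP by simp
  thus ?thesis
    by (simp add: eval_fps_diff eval_fps_add eval_fps_mult rads)
qed


lemma J_eq: "besselJ1 z = yF Af z"
proof -
  have s: "summable (\<lambda>n. aco n * (wz z)^n)"
    using summable_fps[of "wz z" Af] rad_Af by (simp add: Af_def)
  have "yF Af z = (\<Sum>n. z/2 * (aco n * wz z ^ n))"
    unfolding yF_def eval_fps_def Af_def using suminf_mult[OF s, of "z/2"] by simp
  also have "\<dots> = besselJ1 z" unfolding besselJ1_def
  proof (intro arg_cong[where f=suminf] ext)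
    fix n
    have w: "wz z = (-1) * (z/2)^2" by (simp add: wz_def power_divide)
    have "wz z ^ n = (-1)^n * ((z/2)^2)^n" unfolding w by (simp only: power_mult_distrib)
    moreover have "(z/2)^(2*n+1) = z/2 * ((z/2)^2)^n" by (simp add: power_mult)
    ultimately show "z/2 * (aco n * wz z ^ n) = (-1)^n * (z/2)^(2*n+1) / (of_nat (fact n) * of_nat (fact (n+1)))"
      unfolding aco_def by (simp only:) (simp add: field_simps del: fact_Suc)
  qed
  finally show ?thesis ..
qed

lemma Y_sum_eq: "(\<Sum>j. (Digamma (of_nat (j + 1)) + Digamma (of_nat (j + 2))) * (- (z ^ 2) / 4) ^ j / (of_nat (fact j) * of_nat (fact (j + 1)))) = eval_fps Pf (wz z)"
  unfolding eval_fps_def Pf_def wz_def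
  by (intro arg_cong[where f=suminf] ext) (simp add: bco_def aco_def)

lemma hankel_eq: "hankel1 z = yF Af z + \<i> * (-2/(of_real pi * z) + 2/of_real pi * Ln (z/2) * yF Af z - 1/of_real pi * yF Pf z)"
  unfolding hankel1_def besselY1_def J_eq Y_sum_eq by (simp add: yF_def)

definition Hd :: "complex \<Rightarrow> complex" where
  "Hd z = ydF Af z + \<i> * (2/(of_real pi * z^2) + 2/of_real pi * (yF Af z / z + Ln (z/2) * ydF Af z) - 1/of_real pi * ydF Pf z)"

definition Gf :: "complex \<Rightarrow> complex" where
  "Gf z = z * ydF Af z + \<i> * (2/(of_real pi * z) + 2/of_real pi * (yF Af z + Ln (z/2) * (z * ydF Af z)) - 1/of_real pi * (z * ydF Pf z))"

lemma Gf_eq: "z \<noteq> 0 \<Longrightarrow> Gf z = z * Hd z"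
  unfolding Gf_def Hd_def by (simp add: field_simps power2_eq_square)

lemma d_Ln: assumes "z/2 \<notin> \<real>\<^sub>\<le>\<^sub>0" shows "((\<lambda>z. Ln (z/2)) has_field_derivative 1/z) (at z)"
proof -
  have d2: "((\<lambda>z. z/2) has_field_derivative 1/2) (at z)" by (auto intro!: derivative_eq_intros)
  have "((\<lambda>z. Ln (z/2)) has_field_derivative inverse (z/2) * (1/2)) (at z)"
    by (rule DERIV_chain2[where f=Ln and g="\<lambda>z. z/2", OF _ d2]) (use has_field_derivative_Ln[OF assms] in simp)
  thus ?thesis by (simp add: field_simps)
qed

lemma d_hankel:
  assumes z: "z/2 \<notin> \<real>\<^sub>\<le>\<^sub>0"
  shows "(hankel1 has_field_derivative Hd z) (at z)"
proof -
  have z0: "z \<noteq> 0" using z by auto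
  have hf: "hankel1 = (\<lambda>z. yF Af z + \<i> * (-2/(of_real pi * z) + 2/of_real pi * Ln (z/2) * yF Af z - 1/of_real pi * yF Pf z))"
    by (intro ext hankel_eq)
  note dA = d_yF[OF rad_Af] and dP = d_yF[OF rad_Pf] and dL = d_Ln[OF z]
  have g1: "((\<lambda>z. -2/(of_real pi * z)) has_field_derivative 2/(of_real pi * z^2)) (at z)"
  proof -
    have "((\<lambda>z. -2 / of_real pi * inverse z) has_field_derivative -2 / of_real pi * (- (inverse z ^ Suc (Suc 0)))) (at z)"
      by (intro DERIV_cmult DERIV_inverse z0)
    moreover have "(\<lambda>z::complex. -2 / of_real pi * inverse z) = (\<lambda>z. -2 / (of_real pi * z))"
      by (auto simp: divide_inverse)
    moreover have "-2 / of_real pi * (- (inverse z ^ Suc (Suc 0))) = 2 / (of_real pi * z^2)"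
      by (simp add: divide_inverse power2_eq_square)
    ultimately show ?thesis by simp
  qed
  have g2: "((\<lambda>z. 2/of_real pi * Ln (z/2) * yF Af z) has_field_derivative
      2/of_real pi * Ln (z/2) * ydF Af z + 2/of_real pi * (1/z) * yF Af z) (at z)"
    by (intro DERIV_mult' DERIV_cmult dL dA)
  have g3: "((\<lambda>z. 1/of_real pi * yF Pf z) has_field_derivative 1/of_real pi * ydF Pf z) (at z)"
    by (intro DERIV_cmult dP)
  have "(hankel1 has_field_derivative ydF Af z + \<i> * (2/(of_real pi * z^2) +
      (2/of_real pi * Ln (z/2) * ydF Af z + 2/of_real pi * (1/z) * yF Af z) - 1/of_real pi * ydF Pf z)) (at z)"
    unfolding hf by (intro DERIV_add DERIV_cmult DERIV_diff dA g1 g2 g3)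
  moreover have "ydF Af z + \<i> * (2/(of_real pi * z^2) +
      (2/of_real pi * Ln (z/2) * ydF Af z + 2/of_real pi * (1/z) * yF Af z) - 1/of_real pi * ydF Pf z) = Hd z"
    unfolding Hd_def by (simp add: algebra_simps)
  ultimately show ?thesis by simp
qed

lemma d_Gf:
  assumes z: "z/2 \<notin> \<real>\<^sub>\<le>\<^sub>0"
  shows "(Gf has_field_derivative (1/z - z) * hankel1 z) (at z)"
proof -
  have z0: "z \<noteq> 0" using z by auto
  define A0 where "A0 = eval_fps Af (wz z)"
  define A1 where "A1 = eval_fps (fps_deriv Af) (wz z)"
  define A2 where "A2 = eval_fps (fps_deriv (fps_deriv Af)) (wz z)"
  define P0 where "P0 = eval_fps Pf (wz z)"
  define P1 where "P1 = eval_fps (fps_deriv Pf) (wz z)"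
  define P2 where "P2 = eval_fps (fps_deriv (fps_deriv Pf)) (wz z)"
  define L where "L = Ln (z/2)"
  define DA where "DA = (1 - z^2)/2 * A0"
  define DP where "DP = (1 - z^2)/2 * P0 + 2 * (A0 + 2 * wz z * A1 - 1)"
  have qa: "wz z * A2 + 2 * A1 - A0 = 0" unfolding A0_def A1_def A2_def by (rule QA_eval)
  have qp: "wz z * (wz z * P2 + 2 * P1 - P0) = A0 + 2 * wz z * A1 - 1"
    unfolding A0_def A1_def P0_def P1_def P2_def by (rule QP_eval)
  have f1: "((\<lambda>z. z * ydF Af z) has_field_derivative DA) (at z)"
    using d_zydF[OF rad_Af, of z] unfolding DA_def A0_def[symmetric] A1_def[symmetric] A2_def[symmetric] qa
    by simp
  have f4: "((\<lambda>z. z * ydF Pf z) has_field_derivative DP) (at z)"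
  proof -
    have "2 * wz z * (wz z * P2 + 2 * P1 - P0) = 2 * (A0 + 2 * wz z * A1 - 1)"
      using qp by (simp add: mult.assoc)
    thus ?thesis
      using d_zydF[OF rad_Pf, of z] unfolding DP_def P0_def[symmetric] P1_def[symmetric] P2_def[symmetric]
      by simp
  qed
  have f2: "((\<lambda>z. 2 / (of_real pi * z)) has_field_derivative - 2 / (of_real pi * z^2)) (at z)"
  proof -
    have "((\<lambda>z. 2 / of_real pi * inverse z) has_field_derivative 2 / of_real pi * (- (inverse z ^ Suc (Suc 0)))) (at z)"
      by (intro DERIV_cmult DERIV_inverse z0)
    moreover have "(\<lambda>z::complex. 2 / of_real pi * inverse z) = (\<lambda>z. 2 / (of_real pi * z))"
      by (auto simp: divide_inverse)
    moreover have "2 / of_real pi * (- (inverse z ^ Suc (Suc 0))) = - 2 / (of_real pi * z^2)"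
      by (simp add: divide_inverse power2_eq_square)
    ultimately show ?thesis by simp
  qed
  have f3: "((\<lambda>z. yF Af z + Ln (z/2) * (z * ydF Af z)) has_field_derivative
      ydF Af z + (L * DA + 1/z * (z * ydF Af z))) (at z)"
    unfolding L_def by (intro DERIV_add d_yF rad_Af DERIV_mult' d_Ln z f1)
  have "(Gf has_field_derivative DA + \<i> * (- 2 / (of_real pi * z^2) +
      2 / of_real pi * (ydF Af z + (L * DA + 1/z * (z * ydF Af z))) - 1 / of_real pi * DP)) (at z)"
    unfolding Gf_def[abs_def]
    by (intro DERIV_add DERIV_cmult DERIV_diff f1 f2 f3 f4)
  moreover have "DA + \<i> * (- 2 / (of_real pi * z^2) +
      2 / of_real pi * (ydF Af z + (L * DA + 1/z * (z * ydF Af z))) - 1 / of_real pi * DP)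
      = (1/z - z) * hankel1 z"
  proof -
    have ydA: "ydF Af z = A0/2 + wz z * A1" unfolding ydF_def A0_def A1_def ..
    have yA: "yF Af z = z/2 * A0" unfolding yF_def A0_def ..
    have yP: "yF Pf z = z/2 * P0" unfolding yF_def P0_def ..
    have wzeq: "wz z = -(z^2)/4" by (simp add: wz_def)
    have pi0: "(of_real pi :: complex) \<noteq> 0" by simp
    have e: "1/z * (z * ydF Af z) = ydF Af z" using z0 by simp
    show ?thesis unfolding e unfolding hankel_eq ydA yA yP L_def[symmetric] DA_def DP_def unfolding wzeq
      by (rule alg[OF z0 pi0, where XA=A0 and XB=A1 and XP=P0 and XL=L])
  qed
  ultimately show ?thesis by simp
qed

lemma iz_ok: "s > 0 \<Longrightarrow> (\<i> * of_real s) / 2 \<notin> \<real>\<^sub>\<le>\<^sub>0"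
  by (simp add: complex_nonpos_Reals_iff)

lemma path_deriv:
  assumes "(g has_field_derivative g') (at (\<i> * of_real s))"
  shows "((\<lambda>t. Re (g (\<i> * of_real t))) has_real_derivative Re (\<i> * g')) (at s)"
    and "((\<lambda>t. Im (g (\<i> * of_real t))) has_real_derivative Im (\<i> * g')) (at s)"
proof -
  have f: "((\<lambda>t. \<i> * of_real t) has_vector_derivative \<i>) (at s)"
    using has_vector_derivative_real_field[of "\<lambda>w. \<i> * w" \<i> s UNIV]
    by (auto intro!: derivative_eq_intros)
  have "((g \<circ> (\<lambda>t. \<i> * of_real t)) has_vector_derivative \<i> * g') (at s)"
    by (rule field_vector_diff_chain_at[OF f]) (use assms in simp)
  hence v: "((\<lambda>t. g (\<i> * of_real t)) has_vector_derivative \<i> * g') (at s)" by (simp add: o_def)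
  show "((\<lambda>t. Re (g (\<i> * of_real t))) has_real_derivative Re (\<i> * g')) (at s)"
    by (rule has_field_derivative_Re[OF v])
  show "((\<lambda>t. Im (g (\<i> * of_real t))) has_real_derivative Im (\<i> * g')) (at s)"
    by (rule has_field_derivative_Im[OF v])
qed

lemma ifac: "s > 0 \<Longrightarrow> \<i> * (1 / (\<i> * of_real s) - \<i> * of_real s) = complex_of_real (s + 1/s)"
  by (simp add: field_simps)

lemma re_bound: "\<exists>S C. \<forall>s\<ge>S. \<bar>Re (\<i> * Hd (\<i> * of_real s))\<bar> \<le> C * \<bar>Re (hankel1 (\<i> * of_real s))\<bar>"
proof (rule ode_bound[where v = "\<lambda>s. Re (Gf (\<i> * of_real s))"])
  fix s :: real assume s: "s > 0"
  show "((\<lambda>s. Re (hankel1 (\<i> * of_real s))) has_real_derivative Re (\<i> * Hd (\<i> * of_real s))) (at s)"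
    by (rule path_deriv(1)[OF d_hankel[OF iz_ok[OF s]]])
  have "((\<lambda>s. Re (Gf (\<i> * of_real s))) has_real_derivative
      Re (\<i> * ((1 / (\<i> * of_real s) - \<i> * of_real s) * hankel1 (\<i> * of_real s)))) (at s)"
    by (rule path_deriv(1)[OF d_Gf[OF iz_ok[OF s]]])
  moreover have "Re (\<i> * ((1 / (\<i> * of_real s) - \<i> * of_real s) * hankel1 (\<i> * of_real s)))
      = (s + 1/s) * Re (hankel1 (\<i> * of_real s))"
    using ifac[OF s] by (simp only: mult.assoc[symmetric]) simp
  ultimately show "((\<lambda>s. Re (Gf (\<i> * of_real s))) has_real_derivative (s + 1/s) * Re (hankel1 (\<i> * of_real s))) (at s)"
    by simp
  have "Gf (\<i> * of_real s) = of_real s * (\<i> * Hd (\<i> * of_real s))"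
    using s by (subst Gf_eq) (auto simp: algebra_simps)
  thus "Re (Gf (\<i> * of_real s)) = s * Re (\<i> * Hd (\<i> * of_real s))" by simp
qed

lemma im_bound: "\<exists>S C. \<forall>s\<ge>S. \<bar>Im (\<i> * Hd (\<i> * of_real s))\<bar> \<le> C * \<bar>Im (hankel1 (\<i> * of_real s))\<bar>"
proof (rule ode_bound[where v = "\<lambda>s. Im (Gf (\<i> * of_real s))"])
  fix s :: real assume s: "s > 0"
  show "((\<lambda>s. Im (hankel1 (\<i> * of_real s))) has_real_derivative Im (\<i> * Hd (\<i> * of_real s))) (at s)"
    by (rule path_deriv(2)[OF d_hankel[OF iz_ok[OF s]]])
  have "((\<lambda>s. Im (Gf (\<i> * of_real s))) has_real_derivative
      Im (\<i> * ((1 / (\<i> * of_real s) - \<i> * of_real s) * hankel1 (\<i> * of_real s)))) (at s)"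
    by (rule path_deriv(2)[OF d_Gf[OF iz_ok[OF s]]])
  moreover have "Im (\<i> * ((1 / (\<i> * of_real s) - \<i> * of_real s) * hankel1 (\<i> * of_real s)))
      = (s + 1/s) * Im (hankel1 (\<i> * of_real s))"
    using ifac[OF s] by (simp only: mult.assoc[symmetric]) simp
  ultimately show "((\<lambda>s. Im (Gf (\<i> * of_real s))) has_real_derivative (s + 1/s) * Im (hankel1 (\<i> * of_real s))) (at s)"
    by simp
  have "Gf (\<i> * of_real s) = of_real s * (\<i> * Hd (\<i> * of_real s))"
    using s by (subst Gf_eq) (auto simp: algebra_simps)
  thus "Im (Gf (\<i> * of_real s)) = s * Im (\<i> * Hd (\<i> * of_real s))" by simp
qed

lemma hfun_bound: "\<exists>S C. S > 0 \<and> C \<ge> 0 \<and> (\<forall>s\<ge>S. cmod (hfun (\<i> * of_real s)) \<le> C * s)"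
proof -
  obtain S1 C1 where b1: "\<And>s. s \<ge> S1 \<Longrightarrow> \<bar>Re (\<i> * Hd (\<i> * of_real s))\<bar> \<le> C1 * \<bar>Re (hankel1 (\<i> * of_real s))\<bar>"
    using re_bound by blast
  obtain S2 C2 where b2: "\<And>s. s \<ge> S2 \<Longrightarrow> \<bar>Im (\<i> * Hd (\<i> * of_real s))\<bar> \<le> C2 * \<bar>Im (hankel1 (\<i> * of_real s))\<bar>"
    using im_bound by blast
  define S where "S = max (max S1 S2) 1"
  define Cm where "Cm = max (max C1 C2) 0"
  have "cmod (hfun (\<i> * of_real s)) \<le> (2 * Cm) * s" if s: "s \<ge> S" for s
  proof -
    have s0: "s > 0" "s \<ge> S1" "s \<ge> S2" using s unfolding S_def by auto
    define z where "z = \<i> * complex_of_real s"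
    define H where "H = hankel1 z"
    define D where "D = Hd z"
    have dh: "deriv hankel1 z = D" unfolding D_def z_def
      by (rule DERIV_imp_deriv[OF d_hankel[OF iz_ok[OF s0(1)]]])
    have r: "\<bar>Re (\<i> * D)\<bar> \<le> Cm * \<bar>Re H\<bar>"
    proof -
      have "\<bar>Re (\<i> * D)\<bar> \<le> C1 * \<bar>Re H\<bar>" using b1[OF s0(2)] unfolding D_def H_def z_def .
      also have "\<dots> \<le> Cm * \<bar>Re H\<bar>" unfolding Cm_def by (intro mult_right_mono) auto
      finally show ?thesis .
    qed
    have i: "\<bar>Im (\<i> * D)\<bar> \<le> Cm * \<bar>Im H\<bar>"
    proof -
      have "\<bar>Im (\<i> * D)\<bar> \<le> C2 * \<bar>Im H\<bar>" using b2[OF s0(3)] unfolding D_def H_def z_def .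
      also have "\<dots> \<le> Cm * \<bar>Im H\<bar>" unfolding Cm_def by (intro mult_right_mono) auto
      finally show ?thesis .
    qed
    have Cm0: "Cm \<ge> 0" unfolding Cm_def by simp
    have "cmod D = cmod (\<i> * D)" by (simp add: norm_mult)
    also have "\<dots> \<le> \<bar>Re (\<i> * D)\<bar> + \<bar>Im (\<i> * D)\<bar>" by (rule cmod_le)
    also have "\<dots> \<le> Cm * \<bar>Re H\<bar> + Cm * \<bar>Im H\<bar>" using r i by linarith
    also have "\<dots> \<le> Cm * cmod H + Cm * cmod H"
      using Cm0 abs_Re_le_cmod[of H] abs_Im_le_cmod[of H] by (intro add_mono mult_left_mono) auto
    finally have cD: "cmod D \<le> 2 * Cm * cmod H" by simp
    have hz: "hfun z = z * D / H" unfolding hfun_def dh H_def ..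
    show ?thesis
    proof (cases "H = 0")
      case True
      thus ?thesis using hz Cm0 s0 unfolding z_def by simp
    next
      case False
      have "cmod (hfun z) = s * cmod D / cmod H"
        unfolding hz unfolding z_def using s0 by (simp add: norm_mult norm_divide)
      also have "\<dots> \<le> s * (2 * Cm * cmod H) / cmod H"
        using False s0 cD by (intro divide_right_mono mult_left_mono) auto
      also have "\<dots> = 2 * Cm * s" using False by simp
      finally show ?thesis unfolding z_def by simp
    qed
  qed
  moreover have "S > 0" "2 * Cm \<ge> 0" unfolding S_def Cm_def by auto
  ultimately show ?thesis by blast
qed


lemma mode_bound:
  fixes Z R k :: real
  assumes Z: "Z > 0" and R: "R > 0" and k: "k > 0"
  shows "\<exists>B>0. \<forall>m::nat. m \<ge> 1 \<longrightarrow> cmod (hfun (kmode k Z m * of_real R)) \<le> B * real m"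
proof -
  obtain S Cb where S: "S > 0" and Cb: "Cb \<ge> 0" and hb: "\<And>s. s \<ge> S \<Longrightarrow> cmod (hfun (\<i> * of_real s)) \<le> Cb * s"
    using hfun_bound by blast
  define X where "X = sqrt (k\<^sup>2 + (S/R)\<^sup>2)"
  define M where "M = nat (ceiling (X * Z / pi)) + 1"
  define K where "K = Cb * R * pi / Z"
  have K0: "K \<ge> 0" unfolding K_def using Cb R Z by simp
  have X0: "X \<ge> 0" unfolding X_def by simp
  have Xk: "k \<le> X" unfolding X_def
    using real_sqrt_le_mono[of "k\<^sup>2" "k\<^sup>2 + (S/R)\<^sup>2"] k by simp
  have large: "cmod (hfun (kmode k Z m * of_real R)) \<le> K * real m" if m: "m \<ge> M" for m :: nat
  proof -
    define a where "a = real m * pi / Z"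
    have "real m \<ge> real M" using m by simp
    moreover have "real M > X * Z / pi"
    proof -
      have "real (nat (ceiling (X * Z / pi))) \<ge> X * Z / pi"
      proof -
        have "0 \<le> X * Z / pi" using X0 Z by simp
        hence c0: "0 \<le> ceiling (X * Z / pi)" by simp
        have "real (nat (ceiling (X * Z / pi))) = of_int (ceiling (X * Z / pi))"
          by (rule of_nat_nat[OF c0])
        thus ?thesis using le_of_int_ceiling[of "X * Z / pi"] by linarith
      qed
      thus ?thesis unfolding M_def by simp
    qed
    ultimately have "real m > X * Z / pi" by simp
    hence aX: "a > X" unfolding a_def using Z by (simp add: field_simps)
    hence nk: "\<not> k > a" using Xk by simp
    have a0: "a \<ge> 0" using aX X0 by simp
    have "a\<^sup>2 > X\<^sup>2" using aX X0 by (simp add: power_strict_mono)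
    hence "a\<^sup>2 - k\<^sup>2 > (S/R)\<^sup>2" unfolding X_def by simp
    hence "sqrt (a\<^sup>2 - k\<^sup>2) > S/R"
      using S R by (intro real_less_rsqrt) auto
    hence tS: "sqrt (a\<^sup>2 - k\<^sup>2) * R > S" using R by (simp add: field_simps)
    have ta: "sqrt (a\<^sup>2 - k\<^sup>2) \<le> a"
      using real_sqrt_le_mono[of "a\<^sup>2 - k\<^sup>2" "a\<^sup>2"] a0 by simp
    have km: "kmode k Z m * of_real R = \<i> * of_real (sqrt (a\<^sup>2 - k\<^sup>2) * R)"
      using nk unfolding kmode_def a_def by simp
    have "cmod (hfun (kmode k Z m * of_real R)) \<le> Cb * (sqrt (a\<^sup>2 - k\<^sup>2) * R)"
      unfolding km using tS by (intro hb) simp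
    also have "\<dots> \<le> Cb * (a * R)" using ta R Cb by (intro mult_left_mono mult_right_mono) auto
    also have "\<dots> = K * real m" unfolding K_def a_def by simp
    finally show ?thesis .
  qed
  define B0 where "B0 = (\<Sum>m<M. cmod (hfun (kmode k Z m * of_real R)))"
  have B00: "B0 \<ge> 0" unfolding B0_def by (intro sum_nonneg) auto
  have small: "cmod (hfun (kmode k Z m * of_real R)) \<le> B0" if "m < M" for m
    unfolding B0_def using that by (intro member_le_sum) auto
  define B where "B = B0 + K + 1"
  have "cmod (hfun (kmode k Z m * of_real R)) \<le> B * real m" if m1: "m \<ge> 1" for m :: nat
  proof (cases "m < M")
    case True
    have "cmod (hfun (kmode k Z m * of_real R)) \<le> B0" by (rule small[OF True])
    also have "\<dots> \<le> B" unfolding B_def using K0 by simp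
    also have "\<dots> \<le> B * real m" using m1 B00 K0 unfolding B_def by simp
    finally show ?thesis .
  next
    case False
    hence "cmod (hfun (kmode k Z m * of_real R)) \<le> K * real m" by (intro large) simp
    also have "\<dots> \<le> B * real m" unfolding B_def using B00 by (intro mult_right_mono) auto
    finally show ?thesis .
  qed
  moreover have "B > 0" unfolding B_def using B00 K0 by simp
  ultimately show ?thesis by blast
qed

theorem lemma3p3:
  fixes Z R k :: real
  assumes "Z > 0" and "R > 0" and "k > 0"
    and "\<And>m::nat. m \<ge> 1 \<Longrightarrow> k \<noteq> real m * pi / Z"
  shows "\<exists>C>0. \<forall>v. in_Hhalf v \<longrightarrow>
           in_Hmhalf (DtN k R Z v) \<and> norm_Hmhalf (DtN k R Z v) \<le> C * norm_Hhalf v"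
proof -
  obtain B where B: "B > 0" and hB: "\<And>m::nat. m \<ge> 1 \<Longrightarrow> cmod (hfun (kmode k Z m * of_real R)) \<le> B * real m"
    using mode_bound[OF assms(1-3)] by blast
  have "in_Hmhalf (DtN k R Z v) \<and> norm_Hmhalf (DtN k R Z v) \<le> B * norm_Hhalf v" if v: "in_Hhalf v" for v
  proof -
    define f where "f m = (cmod (DtN k R Z v m))\<^sup>2 / real m" for m
    define g where "g m = B\<^sup>2 * (real m * (cmod (v m))\<^sup>2)" for m
    have sv: "summable (\<lambda>m. real m * (cmod (v m))\<^sup>2)" using v unfolding in_Hhalf_def .
    have sg: "summable g" unfolding g_def by (intro summable_mult sv)
    have f0: "f m \<ge> 0" for m unfolding f_def by simp
    have fg: "f m \<le> g m" for m
    proof (cases "m = 0")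
      case True
      thus ?thesis unfolding f_def g_def DtN_def by simp
    next
      case False
      hence m1: "m \<ge> 1" by simp
      have h: "cmod (hfun (kmode k Z m * of_real R)) \<le> B * real m" by (rule hB[OF m1])
      have "f m = (cmod (hfun (kmode k Z m * of_real R)))\<^sup>2 * (cmod (v m))\<^sup>2 / real m"
        unfolding f_def DtN_def using False by (simp add: norm_mult power_mult_distrib)
      also have "\<dots> \<le> (B * real m)\<^sup>2 * (cmod (v m))\<^sup>2 / real m"
        using h by (intro divide_right_mono mult_right_mono power_mono) auto
      also have "\<dots> = g m" unfolding g_def using False by (simp add: power2_eq_square field_simps)
      finally show ?thesis .
    qed
    have sf: "summable f"
      by (rule summable_comparison_test'[OF sg, of 0]) (use f0 fg in simp)
    have "suminf f \<le> suminf g" by (rule suminf_le[OF fg sf sg])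
    also have "suminf g = B\<^sup>2 * (\<Sum>m. real m * (cmod (v m))\<^sup>2)"
      unfolding g_def by (rule suminf_mult[OF sv])
    finally have le: "suminf f \<le> B\<^sup>2 * (\<Sum>m. real m * (cmod (v m))\<^sup>2)" .
    have "norm_Hmhalf (DtN k R Z v) = sqrt (suminf f)" unfolding norm_Hmhalf_def f_def ..
    also have "\<dots> \<le> sqrt (B\<^sup>2 * (\<Sum>m. real m * (cmod (v m))\<^sup>2))" by (rule real_sqrt_le_mono[OF le])
    also have "\<dots> = B * norm_Hhalf v" unfolding norm_Hhalf_def using B by (simp add: real_sqrt_mult)
    finally have "norm_Hmhalf (DtN k R Z v) \<le> B * norm_Hhalf v" .
    moreover have "in_Hmhalf (DtN k R Z v)" unfolding in_Hmhalf_def using sf unfolding f_def .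
    ultimately show ?thesis by simp
  qed
  with B show ?thesis by blast
qed

end
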